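(* Let $G$ be a connected chain graph with minimum degree $\delta(G)\ge 3$. Then $px_3(G)\le 3$. Moreover, the bound is tight: let $s\ge 4$ and $t\ge 2\cdot 2^3+4=20$, and let $G$ be the bipartite graph with parts $U=\{u_1,\dots,u_s\}$, $V=\{v_1,\dots,v_t\}$ where $N(u_1)=\dots=N(u_{s-3})=\{v_1,v_2,v_3\}$ and $N(u_{s-2})=N(u_{s-1})=N(u_s)=V$; then $px_3(G)=3$.
   Context: All graphs are finite, simple and undirected; $N(v)$ is the neighborhood of $v$. A bipartite graph $G$ with parts $U,V$ is a chain graph if $U$ can be ordered $u_1,\dots,u_s$ with $N(u_1)\subseteq N(u_2)\subseteq\cdots\subseteq N(u_s)$. An edge-coloring assigns colors to edges, adjacent edges being allowed to share a color. A tree in an edge-colored graph is proper if no two adjacent edges of it receive the same color. An edge-coloring of $G$ is a $3$-proper coloring if for every $3$-element set $S\subseteq V(G)$ there is a proper tree in $G$ containing all vertices of $S$; $px_3(G)$ is the minimum number of colors in a $3$-proper coloring of $G$. *)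

theory Defs
  imports Main
begin

definition simple_graph :: "'a set \<Rightarrow> 'a set set \<Rightarrow> bool" where
  "simple_graph V E \<longleftrightarrow> finite V \<and>
     (\<forall>e\<in>E. \<exists>u v. u \<in> V \<and> v \<in> V \<and> u \<noteq> v \<and> e = {u, v})"

definition nbhd :: "'a set \<Rightarrow> 'a set set \<Rightarrow> 'a \<Rightarrow> 'a set" where
  "nbhd V E v = {u \<in> V. {u, v} \<in> E}"

definition min_degree :: "'a set \<Rightarrow> 'a set set \<Rightarrow> nat" where
  "min_degree V E = Min ((\<lambda>v. card (nbhd V E v)) ` V)"

definition connected_graph :: "'a set \<Rightarrow> 'a set set \<Rightarrow> bool" where
  "connected_graph V E \<longleftrightarrow> V \<noteq> {} \<and>
     (\<forall>x\<in>V. \<forall>y\<in>V. (x, y) \<in> {(a, b). {a, b} \<in> E}\<^sup>*)"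

definition bipartition :: "'a set \<Rightarrow> 'a set set \<Rightarrow> 'a set \<Rightarrow> 'a set \<Rightarrow> bool" where
  "bipartition V E U W \<longleftrightarrow> U \<inter> W = {} \<and> U \<union> W = V \<and>
     (\<forall>e\<in>E. \<exists>u\<in>U. \<exists>w\<in>W. e = {u, w})"

definition chain_graph :: "'a set \<Rightarrow> 'a set set \<Rightarrow> bool" where
  "chain_graph V E \<longleftrightarrow> simple_graph V E \<and>
     (\<exists>U W. bipartition V E U W \<and>
        (\<exists>us. distinct us \<and> set us = U \<and>
           (\<forall>i j. i \<le> j \<and> j < length us \<longrightarrow> nbhd V E (us ! i) \<subseteq> nbhd V E (us ! j))))"

definition is_tree_in :: "'a set \<Rightarrow> 'a set set \<Rightarrow> 'a set \<Rightarrow> 'a set set \<Rightarrow> bool" where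
  "is_tree_in V E VT ET \<longleftrightarrow> VT \<subseteq> V \<and> ET \<subseteq> E \<and> (\<forall>e\<in>ET. e \<subseteq> VT) \<and>
     connected_graph VT ET \<and> card ET + 1 = card VT"

definition proper_edges :: "('a set \<Rightarrow> nat) \<Rightarrow> 'a set set \<Rightarrow> bool" where
  "proper_edges c ET \<longleftrightarrow>
     (\<forall>e1\<in>ET. \<forall>e2\<in>ET. e1 \<noteq> e2 \<and> e1 \<inter> e2 \<noteq> {} \<longrightarrow> c e1 \<noteq> c e2)"

definition three_proper_coloring :: "'a set \<Rightarrow> 'a set set \<Rightarrow> ('a set \<Rightarrow> nat) \<Rightarrow> bool" where
  "three_proper_coloring V E c \<longleftrightarrow>
     (\<forall>S. S \<subseteq> V \<and> card S = 3 \<longrightarrow>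
        (\<exists>VT ET. is_tree_in V E VT ET \<and> S \<subseteq> VT \<and> proper_edges c ET))"

definition px3 :: "'a set \<Rightarrow> 'a set set \<Rightarrow> nat" where
  "px3 V E = (LEAST k. \<exists>c :: 'a set \<Rightarrow> nat. (\<forall>e\<in>E. c e < k) \<and> three_proper_coloring V E c)"

text \<open>The extremal example: u_i = Inl i (1..s), v_j = Inr j (1..t).\<close>
definition ex_V :: "nat \<Rightarrow> nat \<Rightarrow> (nat + nat) set" where
  "ex_V s t = Inl ` {1..s} \<union> Inr ` {1..t}"

definition ex_E :: "nat \<Rightarrow> nat \<Rightarrow> (nat + nat) set set" where
  "ex_E s t = {{Inl i, Inr j} | i j. 1 \<le> i \<and> i \<le> s \<and> 1 \<le> j \<and> j \<le> t \<and>
                                   (s - 3 < i \<or> j \<le> 3)}"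

end

theory Submission
  imports Defs
begin


lemma tree_single: "v \<in> V \<Longrightarrow> is_tree_in V E {v} {}"
  by (auto simp: is_tree_in_def connected_graph_def)

lemma tree_fin:
  assumes "is_tree_in V E VT ET" shows "finite VT" "finite ET"
proof -
  from assms have cd: "card ET + 1 = card VT" and s: "\<forall>e\<in>ET. e \<subseteq> VT"
    by (auto simp: is_tree_in_def)
  show f: "finite VT" using cd card.infinite by fastforce
  have "ET \<subseteq> Pow VT" using s by auto
  then show "finite ET" using f finite_subset by blast
qed

lemma tree_add_leaf:
  assumes T: "is_tree_in V E VT ET" and x: "x \<in> V" "x \<notin> VT" and y: "y \<in> VT" and e: "{x,y} \<in> E"
  shows "is_tree_in V E (insert x VT) (insert {x,y} ET)"
proof -
  from T have sub: "VT \<subseteq> V" "ET \<subseteq> E" "\<forall>e\<in>ET. e \<subseteq> VT" and con: "connected_graph VT ET"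
    and cd: "card ET + 1 = card VT"
    by (auto simp: is_tree_in_def)
  have finVT: "finite VT" and finET: "finite ET" using tree_fin[OF T] by auto
  have notin: "{x,y} \<notin> ET" using sub(3) x(2) by auto
  have card: "card (insert {x,y} ET) + 1 = card (insert x VT)" using finET finVT notin x(2) cd by simp
  let ?R = "{(a, b). {a, b} \<in> ET}"
  let ?R' = "{(a, b). {a, b} \<in> insert {x,y} ET}"
  have mono: "?R\<^sup>* \<subseteq> ?R'\<^sup>*" by (rule rtrancl_mono) auto
  have xy: "(x,y) \<in> ?R'\<^sup>*" "(y,x) \<in> ?R'\<^sup>*" by (auto simp: insert_commute)
  have toy: "(a,y) \<in> ?R'\<^sup>*" "(y,a) \<in> ?R'\<^sup>*" if "a \<in> insert x VT" for a
  proof -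
    show "(a,y) \<in> ?R'\<^sup>*"
    proof (cases "a = x")
      case True then show ?thesis using xy by simp
    next
      case False then have "a \<in> VT" using that by auto
      then have "(a,y) \<in> ?R\<^sup>*" using con y by (auto simp: connected_graph_def)
      then show ?thesis using mono by blast
    qed
    show "(y,a) \<in> ?R'\<^sup>*"
    proof (cases "a = x")
      case True then show ?thesis using xy by simp
    next
      case False then have "a \<in> VT" using that by auto
      then have "(y,a) \<in> ?R\<^sup>*" using con y by (auto simp: connected_graph_def)
      then show ?thesis using mono by blast
    qed
  qed
  have conn: "connected_graph (insert x VT) (insert {x,y} ET)"
    unfolding connected_graph_def
  proof (intro conjI ballI)
    show "insert x VT \<noteq> {}" by simp
    fix a b assume a: "a \<in> insert x VT" and b: "b \<in> insert x VT"
    show "(a, b) \<in> ?R'\<^sup>*" using toy[OF a] toy[OF b] by (meson rtrancl_trans)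
  qed
  show ?thesis unfolding is_tree_in_def
    using sub x y e conn card by auto
qed

lemma proper_add:
  assumes "proper_edges c ET" "\<forall>e\<in>ET. y \<in> e \<longrightarrow> c e \<noteq> c {x,y}" "\<forall>e\<in>ET. x \<notin> e"
  shows "proper_edges c (insert {x,y} ET)"
  using assms unfolding proper_edges_def by (auto simp: insert_commute)

definition col :: "'a\<Rightarrow>'a\<Rightarrow>'a\<Rightarrow>'a\<Rightarrow>'a\<Rightarrow>'a\<Rightarrow>'a set \<Rightarrow> nat" where
 "col a0 a1 a2 b0 b1 b2 e =
   (if a0 \<in> e \<and> e \<inter> {b0,b1,b2} = {} then 0 else if a1 \<in> e \<and> e \<inter> {b0,b1,b2} = {} then 1
    else if a2 \<in> e \<and> e \<inter> {b0,b1,b2} = {} then 2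
    else if b0 \<in> e \<and> e \<inter> {a0,a1,a2} = {} then 0 else if b1 \<in> e \<and> e \<inter> {a0,a1,a2} = {} then 1
    else if b2 \<in> e \<and> e \<inter> {a0,a1,a2} = {} then 2
    else if e = {a0,b1} then 2 else if e = {a2,b1} then 0 else if e = {a2,b0} then 1
    else if e = {a1,b0} then 2 else 0)"

locale core =
  fixes V E U W and a0 a1 a2 b0 b1 b2 :: 'a
  assumes UW: "U \<inter> W = {}" "V = U \<union> W"
  and A: "a0 \<in> U" "a1 \<in> U" "a2 \<in> U" "a0 \<noteq> a1" "a0 \<noteq> a2" "a1 \<noteq> a2"
  and B: "b0 \<in> W" "b1 \<in> W" "b2 \<in> W" "b0 \<noteq> b1" "b0 \<noteq> b2" "b1 \<noteq> b2"
  and EA: "\<And>w. w \<in> W \<Longrightarrow> {w,a0} \<in> E \<and> {w,a1} \<in> E \<and> {w,a2} \<in> E"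
  and EB: "\<And>u. u \<in> U \<Longrightarrow> {u,b0} \<in> E \<and> {u,b1} \<in> E \<and> {u,b2} \<in> E"
begin

abbreviation "c \<equiv> col a0 a1 a2 b0 b1 b2"

lemma ne: "a0 \<noteq> b0" "a0 \<noteq> b1" "a0 \<noteq> b2" "a1 \<noteq> b0" "a1 \<noteq> b1" "a1 \<noteq> b2"
   "a2 \<noteq> b0" "a2 \<noteq> b1" "a2 \<noteq> b2"
  using A B UW by blast+

lemma colW: "w \<in> W \<Longrightarrow> w \<notin> {b0,b1,b2} \<Longrightarrow> c {w,a0} = 0 \<and> c {w,a1} = 1 \<and> c {w,a2} = 2"
  using A B UW ne unfolding col_def by auto

lemma colU: "u \<in> U \<Longrightarrow> u \<notin> {a0,a1,a2} \<Longrightarrow> c {u,b0} = 0 \<and> c {u,b1} = 1 \<and> c {u,b2} = 2"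
  using A B UW ne unfolding col_def by auto

lemma colT0: "c {b1,a0} = 2" "c {a2,b1} = 0" "c {b0,a2} = 1" "c {a1,b0} = 2" "c {b2,a1} = 0"
  using A B ne unfolding col_def by (simp_all add: doubleton_eq_iff)

lemma col_lt: "c e < 3"
  unfolding col_def by auto

end


context core begin

lemma attach:
  assumes T: "is_tree_in V E VT ET" "proper_edges c ET"
  and ab: "(a,b,k) \<in> {(a0,b0,0),(a1,b1,1),(a2,b2,2)}"
  and AB: "{a0,a1,a2,b0,b1,b2} \<subseteq> VT"
  and free: "\<forall>e\<in>ET. (a\<in>e \<longrightarrow> c e \<noteq> k) \<and> (b\<in>e \<longrightarrow> c e \<noteq> k)"
  and x: "x \<in> V"
  shows "\<exists>VT' ET'. is_tree_in V E VT' ET' \<and> proper_edges c ET' \<and> insert x VT \<subseteq> VT' \<and>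
     (\<forall>e\<in>ET'. e \<in> ET \<or> (x \<notin> {a0,a1,a2,b0,b1,b2} \<and> (e = {x,a} \<or> e = {x,b})))"
proof (cases "x \<in> VT")
  case True then show ?thesis using T by blast
next
  case False
  have xAB: "x \<notin> {a0,a1,a2,b0,b1,b2}" using False AB by blast
  have sub: "\<forall>e\<in>ET. e \<subseteq> VT" using T(1) by (auto simp: is_tree_in_def)
  have xe: "\<forall>e\<in>ET. x \<notin> e" using sub False by blast
  have aVT: "a \<in> VT" "b \<in> VT" using ab AB by auto
  show ?thesis
  proof (cases "x \<in> W")
    case True
    have Ex: "{x,a} \<in> E" using EA[OF True] ab by auto
    have cx: "c {x,a} = k" using colW[OF True] xAB ab by auto
    have t: "is_tree_in V E (insert x VT) (insert {x,a} ET)"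
      by (rule tree_add_leaf[OF T(1) x False aVT(1) Ex])
    have p: "proper_edges c (insert {x,a} ET)"
      by (rule proper_add[OF T(2)]) (use free cx xe in auto)
    show ?thesis using t p xAB by blast
  next
    case False
    then have xU: "x \<in> U" using x UW by auto
    have Ex: "{x,b} \<in> E" using EB[OF xU] ab by auto
    have cx: "c {x,b} = k" using colU[OF xU] xAB ab by auto
    have t: "is_tree_in V E (insert x VT) (insert {x,b} ET)"
      by (rule tree_add_leaf[OF T(1) x \<open>x \<notin> VT\<close> aVT(2) Ex])
    have p: "proper_edges c (insert {x,b} ET)"
      by (rule proper_add[OF T(2)]) (use free cx xe in auto)
    show ?thesis using t p xAB by blast
  qed
qed

lemma T0: "is_tree_in V E {b2,a1,b0,a2,b1,a0} {{b2,a1},{a1,b0},{b0,a2},{a2,b1},{b1,a0}}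
   \<and> proper_edges c {{b2,a1},{a1,b0},{b0,a2},{a2,b1},{b1,a0}}"
proof -
  have V: "a0 \<in> V" "a1 \<in> V" "a2 \<in> V" "b0 \<in> V" "b1 \<in> V" "b2 \<in> V" using A B UW by auto
  have E1: "{b1,a0} \<in> E" "{b0,a2} \<in> E" "{b2,a1} \<in> E" using EA B by auto
  have E2: "{a2,b1} \<in> E" "{a1,b0} \<in> E" using EB A by auto
  have t1: "is_tree_in V E {a0} {}" by (rule tree_single[OF V(1)])
  have t2: "is_tree_in V E {b1,a0} {{b1,a0}}"
    using tree_add_leaf[OF t1 V(5) _ _ E1(1)] ne by auto
  have t3: "is_tree_in V E {a2,b1,a0} {{a2,b1},{b1,a0}}"
    using tree_add_leaf[OF t2 V(3) _ _ E2(1)] ne A by auto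
  have t4: "is_tree_in V E {b0,a2,b1,a0} {{b0,a2},{a2,b1},{b1,a0}}"
    using tree_add_leaf[OF t3 V(4) _ _ E1(2)] ne B by auto
  have t5: "is_tree_in V E {a1,b0,a2,b1,a0} {{a1,b0},{b0,a2},{a2,b1},{b1,a0}}"
    using tree_add_leaf[OF t4 V(2) _ _ E2(2)] ne A by auto
  have t6: "is_tree_in V E {b2,a1,b0,a2,b1,a0} {{b2,a1},{a1,b0},{b0,a2},{a2,b1},{b1,a0}}"
    using tree_add_leaf[OF t5 V(6) _ _ E1(3)] ne B by auto
  have p1: "proper_edges c {}" by (simp add: proper_edges_def)
  have p2: "proper_edges c {{b1,a0}}"
    by (rule proper_add[OF p1]) auto
  have p3: "proper_edges c {{a2,b1},{b1,a0}}"
    by (rule proper_add[OF p2]) (use colT0 ne A in auto)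
  have p4: "proper_edges c {{b0,a2},{a2,b1},{b1,a0}}"
    by (rule proper_add[OF p3]) (use colT0 ne A B in auto)
  have p5: "proper_edges c {{a1,b0},{b0,a2},{a2,b1},{b1,a0}}"
    by (rule proper_add[OF p4]) (use colT0 ne A B in auto)
  have p6: "proper_edges c {{b2,a1},{a1,b0},{b0,a2},{a2,b1},{b1,a0}}"
    by (rule proper_add[OF p5]) (use colT0 ne A B in auto)
  show ?thesis using t6 p6 by blast
qed

lemma core_col: "three_proper_coloring V E c"
  unfolding three_proper_coloring_def
proof (intro allI impI)
  fix S assume S: "S \<subseteq> V \<and> card S = 3"
  then obtain x y z where xyz: "S = {x,y,z}" by (auto simp: card_3_iff)
  have x: "x \<in> V" "y \<in> V" "z \<in> V" using S xyz by auto
  define ET0 where "ET0 = {{b2,a1},{a1,b0},{b0,a2},{a2,b1},{b1,a0}}"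
  have T: "is_tree_in V E {b2,a1,b0,a2,b1,a0} ET0" "proper_edges c ET0"
    using T0 unfolding ET0_def by auto
  have f0: "\<forall>e\<in>ET0. (a0\<in>e \<longrightarrow> c e \<noteq> 0) \<and> (b0\<in>e \<longrightarrow> c e \<noteq> 0)"
   and f1: "\<forall>e\<in>ET0. (a1\<in>e \<longrightarrow> c e \<noteq> 1) \<and> (b1\<in>e \<longrightarrow> c e \<noteq> 1)"
   and f2: "\<forall>e\<in>ET0. (a2\<in>e \<longrightarrow> c e \<noteq> 2) \<and> (b2\<in>e \<longrightarrow> c e \<noteq> 2)"
    unfolding ET0_def using colT0 ne A B by auto
  obtain VT1 ET1 where T1: "is_tree_in V E VT1 ET1" "proper_edges c ET1"
    "insert x {b2,a1,b0,a2,b1,a0} \<subseteq> VT1"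
    "\<forall>e\<in>ET1. e \<in> ET0 \<or> (x \<notin> {a0,a1,a2,b0,b1,b2} \<and> (e = {x,a0} \<or> e = {x,b0}))"
    using attach[OF T, of a0 b0 0, OF _ _ f0 x(1)] by auto
  have f1': "\<forall>e\<in>ET1. (a1\<in>e \<longrightarrow> c e \<noteq> 1) \<and> (b1\<in>e \<longrightarrow> c e \<noteq> 1)"
   and f2': "\<forall>e\<in>ET1. (a2\<in>e \<longrightarrow> c e \<noteq> 2) \<and> (b2\<in>e \<longrightarrow> c e \<noteq> 2)"
    using T1(4) f1 f2 A B ne by fastforce+
  obtain VT2 ET2 where T2: "is_tree_in V E VT2 ET2" "proper_edges c ET2"
    "insert y VT1 \<subseteq> VT2"
    "\<forall>e\<in>ET2. e \<in> ET1 \<or> (y \<notin> {a0,a1,a2,b0,b1,b2} \<and> (e = {y,a1} \<or> e = {y,b1}))"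
    using attach[OF T1(1,2), of a1 b1 1, OF _ _ f1' x(2)] T1(3) by auto
  have f2'': "\<forall>e\<in>ET2. (a2\<in>e \<longrightarrow> c e \<noteq> 2) \<and> (b2\<in>e \<longrightarrow> c e \<noteq> 2)"
    using T2(4) f2' A B ne by fastforce
  obtain VT3 ET3 where T3: "is_tree_in V E VT3 ET3" "proper_edges c ET3"
    "insert z VT2 \<subseteq> VT3"
    using attach[OF T2(1,2), of a2 b2 2, OF _ _ f2'' x(3)] T1(3) T2(3) by auto
  show "\<exists>VT ET. is_tree_in V E VT ET \<and> S \<subseteq> VT \<and> proper_edges c ET"
    using T3 T2(3) T1(3) xyz by blast
qed

lemma core_main: "\<exists>c. (\<forall>e\<in>E. c e < 3) \<and> three_proper_coloring V E c"
  using core_col col_lt by blast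

end


lemma px3_le3:
  assumes "\<exists>c. (\<forall>e\<in>E. c e < 3) \<and> three_proper_coloring V E c"
  shows "px3 V E \<le> 3"
  unfolding px3_def using assms by (rule Least_le)

lemma part1:
  fixes V :: "'a set"
  assumes ch: "chain_graph V E" and cn: "connected_graph V E" and md: "3 \<le> min_degree V E"
  shows "\<exists>U W a0 a1 a2 b0 b1 b2. core V E U W a0 a1 a2 b0 b1 b2"
proof -
  from ch have sg: "simple_graph V E" unfolding chain_graph_def by blast
  then have finV: "finite V" unfolding simple_graph_def by blast
  have Vne: "V \<noteq> {}" using cn unfolding connected_graph_def by blast
  have deg: "3 \<le> card (nbhd V E v)" if "v \<in> V" for v
  proof -
    have "min_degree V E \<le> card (nbhd V E v)" unfolding min_degree_def
      using finV that by (intro Min_le) auto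
    then show ?thesis using md by linarith
  qed
  from ch obtain U W us where bp: "bipartition V E U W" and dus: "distinct us" and sus: "set us = U"
    and nest: "\<And>i j. i \<le> j \<Longrightarrow> j < length us \<Longrightarrow> nbhd V E (us ! i) \<subseteq> nbhd V E (us ! j)"
    unfolding chain_graph_def by blast
  from bp have UW: "U \<inter> W = {}" "U \<union> W = V" and eE: "\<forall>e\<in>E. \<exists>u\<in>U. \<exists>w\<in>W. e = {u, w}"
    unfolding bipartition_def by auto
  have nbU: "nbhd V E u \<subseteq> W" if "u \<in> U" for u
  proof
    fix x assume "x \<in> nbhd V E u"
    then have "{x,u} \<in> E" unfolding nbhd_def by auto
    then obtain u' w' where "u' \<in> U" "w' \<in> W" "{x,u} = {u',w'}" using eE by blast
    then show "x \<in> W" using that UW(1) by (auto simp: doubleton_eq_iff)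
  qed
  have nbW: "nbhd V E w \<subseteq> U" if "w \<in> W" for w
  proof
    fix x assume "x \<in> nbhd V E w"
    then have "{x,w} \<in> E" unfolding nbhd_def by auto
    then obtain u' w' where "u' \<in> U" "w' \<in> W" "{x,w} = {u',w'}" using eE by blast
    then show "x \<in> U" using that UW(1) by (auto simp: doubleton_eq_iff)
  qed
  have nbI: "x \<in> nbhd V E v \<longleftrightarrow> x \<in> V \<and> {x,v} \<in> E" for x v unfolding nbhd_def by auto
  have finN: "finite (nbhd V E v)" for v using finV unfolding nbhd_def by auto
  obtain w0 where w0: "w0 \<in> W"
  proof -
    obtain v where v: "v \<in> V" using Vne by blast
    show ?thesis
    proof (cases "v \<in> W")
      case True then show ?thesis using that by blast
    next
      case False then have "v \<in> U" using v UW by auto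
      moreover have "nbhd V E v \<noteq> {}" using deg[OF v] by auto
      ultimately show ?thesis using nbU that by blast
    qed
  qed
  define n where "n = length us"
  have "3 \<le> card U"
  proof -
    have "3 \<le> card (nbhd V E w0)" using deg w0 UW by auto
    also have "\<dots> \<le> card U" using nbW[OF w0] finV UW by (intro card_mono) auto
    finally show ?thesis .
  qed
  moreover have "card U = n" using distinct_card[OF dus] sus n_def by simp
  ultimately have n3: "3 \<le> n" by simp
  have "us \<noteq> []" using n3 n_def by auto
  then have u0: "us ! 0 \<in> U" using sus nth_mem[of 0 us] by simp
  have "3 \<le> card (nbhd V E (us ! 0))" using deg u0 UW by auto
  then obtain B where B: "B \<subseteq> nbhd V E (us ! 0)" "card B = 3"
    by (meson obtain_subset_with_card_n)
  then obtain b0 b1 b2 where b: "B = {b0,b1,b2}" "b0 \<noteq> b1" "b1 \<noteq> b2" "b0 \<noteq> b2"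
    by (auto simp: card_3_iff)
  have bW: "b0 \<in> W" "b1 \<in> W" "b2 \<in> W" using B b nbU[OF u0] by auto
  have EB: "{u,b0} \<in> E \<and> {u,b1} \<in> E \<and> {u,b2} \<in> E" if "u \<in> U" for u
  proof -
    have "u \<in> set us" using that sus by simp
    then have "\<exists>j<n. us ! j = u" unfolding n_def in_set_conv_nth .
    then obtain j where j: "j < n" "u = us ! j" by blast
    have "nbhd V E (us ! 0) \<subseteq> nbhd V E u" using nest[of 0 j] j n_def by auto
    then have "b0 \<in> nbhd V E u" "b1 \<in> nbhd V E u" "b2 \<in> nbhd V E u" using B b by auto
    then show ?thesis unfolding nbI by (auto simp: insert_commute)
  qed
  define a0 where "a0 = us ! (n-1)"
  define a1 where "a1 = us ! (n-2)"
  define a2 where "a2 = us ! (n-3)"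
  have aU: "a0 \<in> U" "a1 \<in> U" "a2 \<in> U" using n3 sus n_def a0_def a1_def a2_def by auto
  have ane: "a0 \<noteq> a1" "a0 \<noteq> a2" "a1 \<noteq> a2"
    using n3 dus n_def a0_def a1_def a2_def by (auto simp: nth_eq_iff_index_eq)
  have EA: "{w,a0} \<in> E \<and> {w,a1} \<in> E \<and> {w,a2} \<in> E" if w: "w \<in> W" for w
  proof -
    have "\<exists>i. i \<le> n - 3 \<and> us ! i \<in> nbhd V E w"
    proof (rule ccontr)
      assume "\<not> ?thesis"
      then have nn: "\<And>i. i \<le> n - 3 \<Longrightarrow> us ! i \<notin> nbhd V E w" by blast
      have "nbhd V E w \<subseteq> {us ! (n-2), us ! (n-1)}"
      proof
        fix x assume x: "x \<in> nbhd V E w"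
        then have "x \<in> set us" using nbW[OF w] sus by auto
        then obtain i where i: "i < n" "us ! i = x" using n_def by (auto simp: in_set_conv_nth)
        have "\<not> i \<le> n - 3" using nn i x by blast
        then have "i = n-2 \<or> i = n-1" using i n3 by linarith
        then show "x \<in> {us ! (n-2), us ! (n-1)}" using i by auto
      qed
      then have "card (nbhd V E w) \<le> card {us ! (n-2), us ! (n-1)}" by (intro card_mono) auto
      also have "\<dots> \<le> 2" by (intro card_insert_le_m1) simp_all
      finally show False using deg w UW by fastforce
    qed
    then obtain i where i: "i \<le> n - 3" "us ! i \<in> nbhd V E w" by blast
    have wi: "w \<in> nbhd V E (us ! i)" using i(2) w UW unfolding nbI by (auto simp: insert_commute)
    have "w \<in> nbhd V E a0" "w \<in> nbhd V E a1" "w \<in> nbhd V E a2"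
    proof -
      have "nbhd V E (us ! i) \<subseteq> nbhd V E a0" unfolding a0_def by (rule nest) (use i n3 n_def in linarith)+
      moreover have "nbhd V E (us ! i) \<subseteq> nbhd V E a1" unfolding a1_def by (rule nest) (use i n3 n_def in linarith)+
      moreover have "nbhd V E (us ! i) \<subseteq> nbhd V E a2" unfolding a2_def by (rule nest) (use i n3 n_def in linarith)+
      ultimately show "w \<in> nbhd V E a0" "w \<in> nbhd V E a1" "w \<in> nbhd V E a2" using wi by auto
    qed
    then show ?thesis unfolding nbI by auto
  qed
  have "core V E U W a0 a1 a2 b0 b1 b2"
    by unfold_locales (use UW aU ane bW b EA EB in auto)
  then show ?thesis by blast
qed



lemma pigeon3:
  assumes fB: "finite B" and fA: "finite A" and img: "f ` A \<subseteq> B" and cd: "2 * card B < card A"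
  shows "\<exists>b. 3 \<le> card {a\<in>A. f a = b}"
proof (rule ccontr)
  assume "\<not> ?thesis"
  then have le: "card {a\<in>A. f a = b} \<le> 2" for b
    by (metis not_less_eq_eq numeral_2_eq_2 numeral_3_eq_3)
  have "A = (\<Union>b\<in>B. {a\<in>A. f a = b})" using img by auto
  then have "card A \<le> (\<Sum>b\<in>B. card {a\<in>A. f a = b})" using card_UN_le[OF fB] by metis
  also have "\<dots> \<le> (\<Sum>b\<in>B. 2)" by (rule sum_mono) (rule le)
  also have "\<dots> = 2 * card B" by simp
  finally show False using cd by linarith
qed

lemma card_filter_sum: "finite A \<Longrightarrow> card {x\<in>A. P x} = (\<Sum>x\<in>A. if P x then 1 else 0)"
  by (simp add: sum.inter_filter[symmetric])

lemma handshake: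
  assumes fV: "finite VT" and fE: "finite ET" and sub: "\<forall>e\<in>ET. e \<subseteq> VT" and two: "\<forall>e\<in>ET. card e = 2"
  shows "(\<Sum>v\<in>VT. card {e\<in>ET. v \<in> e}) = 2 * card ET"
proof -
  have "(\<Sum>v\<in>VT. card {e\<in>ET. v \<in> e}) = (\<Sum>v\<in>VT. \<Sum>e\<in>ET. if v \<in> e then 1 else 0)"
    using fE by (simp add: card_filter_sum)
  also have "\<dots> = (\<Sum>e\<in>ET. \<Sum>v\<in>VT. if v \<in> e then 1 else 0)" by (rule sum.swap)
  also have "\<dots> = (\<Sum>e\<in>ET. card {v\<in>VT. v \<in> e})" using fV by (simp add: card_filter_sum)
  also have "\<dots> = (\<Sum>e\<in>ET. 2)"
  proof (rule sum.cong)
    fix e assume "e \<in> ET"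
    then have "{v\<in>VT. v \<in> e} = e" "card e = 2" using sub two by auto
    then show "card {v\<in>VT. v \<in> e} = 2" by simp
  qed simp
  finally show ?thesis by simp
qed

lemma exE_elim: "e \<in> ex_E s t \<Longrightarrow> \<exists>i j. e = {Inl i, Inr j} \<and> 1 \<le> i \<and> i \<le> s \<and> 1 \<le> j \<and> j \<le> t \<and> (s - 3 < i \<or> j \<le> 3)"
  unfolding ex_E_def by blast

lemma exE_intro: "1 \<le> i \<Longrightarrow> i \<le> s \<Longrightarrow> 1 \<le> j \<Longrightarrow> j \<le> t \<Longrightarrow> (s - 3 < i \<or> j \<le> 3) \<Longrightarrow> {Inl i, Inr j} \<in> ex_E s t"
  unfolding ex_E_def by blast

lemma no2:
  assumes s: "4 \<le> s" and t: "20 \<le> t" and cl: "\<forall>e\<in>ex_E s t. c e < 2"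
    and tp: "three_proper_coloring (ex_V s t) (ex_E s t) c"
  shows False
proof -
  define pat where "pat j = (c {Inl (s-2), Inr j}, c {Inl (s-1), Inr j}, c {Inl s, Inr j})" for j
  define J where "J = {4..t}"
  have inE: "{Inl i, Inr j} \<in> ex_E s t" if "j \<in> J" "i \<in> {s-2, s-1, s}" for i j
    using that s unfolding J_def by (intro exE_intro) auto
  define P where "P = {0::nat,1} \<times> {0::nat,1} \<times> {0::nat,1}"
  have img: "pat ` J \<subseteq> P"
    unfolding P_def
  proof
    fix p assume "p \<in> pat ` J"
    then obtain j where j: "j \<in> J" "p = pat j" by blast
    have "c {Inl (s-2), Inr j} < 2" "c {Inl (s-1), Inr j} < 2" "c {Inl s, Inr j} < 2"
      using cl inE[OF j(1)] by auto
    moreover have "\<And>x::nat. x < 2 \<Longrightarrow> x \<in> {0,1}" by auto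
    ultimately show "p \<in> {0::nat,1} \<times> {0::nat,1} \<times> {0::nat,1}" using j(2) unfolding pat_def by (simp only: mem_Times_iff fst_conv snd_conv)
  qed
  have cP: "card P = 8" unfolding P_def by (simp only: card_cartesian_product) (simp add: card_insert_if)
  have cJ: "card J = t - 3" unfolding J_def by simp
  have "\<exists>p. 3 \<le> card {j\<in>J. pat j = p}"
  proof (rule pigeon3[OF _ _ img])
    show "finite P" unfolding P_def by simp
    show "finite J" unfolding J_def by simp
    show "2 * card P < card J" using cP cJ t by linarith
  qed
  then obtain p where "3 \<le> card {j\<in>J. pat j = p}" by blast
  then obtain Q where Q: "Q \<subseteq> {j\<in>J. pat j = p}" "card Q = 3" by (meson obtain_subset_with_card_n)
  then obtain j1 j2 j3 where jj: "Q = {j1,j2,j3}" "j1 \<noteq> j2" "j2 \<noteq> j3" "j1 \<noteq> j3"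
    by (auto simp: card_3_iff)
  have jJ: "j1 \<in> J" "j2 \<in> J" "j3 \<in> J" and pj: "pat j1 = p" "pat j2 = p" "pat j3 = p" using Q jj by auto
  define S :: "(nat + nat) set" where "S = {Inr j1, Inr j2, Inr j3}"
  have S: "S \<subseteq> ex_V s t \<and> card S = 3" using jJ jj unfolding S_def ex_V_def J_def by auto
  then obtain VT ET where T: "is_tree_in (ex_V s t) (ex_E s t) VT ET" and SV: "S \<subseteq> VT"
    and pr: "proper_edges c ET"
    using tp unfolding three_proper_coloring_def by blast
  have fV: "finite VT" and fE: "finite ET" using tree_fin[OF T] by auto
  from T have ETE: "ET \<subseteq> ex_E s t" and sub: "\<forall>e\<in>ET. e \<subseteq> VT" and con: "connected_graph VT ET"
    and cd: "card ET + 1 = card VT" unfolding is_tree_in_def by auto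
  have two: "\<forall>e\<in>ET. card e = 2" using ETE exE_elim by fastforce
  define d where "d v = card {e\<in>ET. v \<in> e}" for v
  have hs: "(\<Sum>v\<in>VT. d v) = 2 * card ET" unfolding d_def by (rule handshake[OF fV fE sub two])
  have cVT: "3 \<le> card VT" using card_mono[OF fV SV] S by simp
  have dle2: "d v \<le> 2" for v
  proof -
    have "inj_on c {e\<in>ET. v \<in> e}"
      using pr unfolding inj_on_def proper_edges_def by blast
    moreover have "c ` {e\<in>ET. v \<in> e} \<subseteq> {0..<2}" using cl ETE by auto
    ultimately have "card {e\<in>ET. v \<in> e} \<le> card {0..<(2::nat)}" by (intro card_inj_on_le) auto
    then show ?thesis unfolding d_def by simp
  qed
  have dge1: "1 \<le> d v" if v: "v \<in> VT" for v
  proof -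
    obtain w where w: "w \<in> VT" "w \<noteq> v"
    proof -
      have "\<not> VT \<subseteq> {v}"
      proof
        assume "VT \<subseteq> {v}"
        then have "card VT \<le> card {v}" by (intro card_mono) auto
        then show False using cVT by simp
      qed
      then show ?thesis using that by blast
    qed
    have "(v,w) \<in> {(a, b). {a, b} \<in> ET}\<^sup>*" using con v w unfolding connected_graph_def by blast
    then obtain b where "{v,b} \<in> ET" using w(2) by (cases rule: converse_rtranclE) auto
    then have "{e\<in>ET. v \<in> e} \<noteq> {}" by auto
    then show ?thesis unfolding d_def using fE by (simp add: Suc_le_eq card_gt_0_iff)
  qed
  define Ai where "Ai j = {i. {Inl i, Inr j} \<in> ET}" for j
  have Ai_sub: "Ai j \<subseteq> {s-2, s-1, s}" if "j \<in> J" for j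
  proof
    fix i assume "i \<in> Ai j"
    then have "{Inl i, Inr j} \<in> ex_E s t" using ETE unfolding Ai_def by auto
    then obtain i' j' where "{Inl i, Inr j} = {Inl i', Inr j'}" "i' \<le> s" "s - 3 < i' \<or> j' \<le> 3"
      using exE_elim by blast
    then show "i \<in> {s-2, s-1, s}" using that s unfolding J_def by (auto simp: doubleton_eq_iff)
  qed
  have d_eq: "d (Inr j) = card (Ai j)" if "j \<in> J" for j
  proof -
    have "{e\<in>ET. Inr j \<in> e} = (\<lambda>i. {Inl i, Inr j}) ` Ai j"
    proof
      show "{e\<in>ET. Inr j \<in> e} \<subseteq> (\<lambda>i. {Inl i, Inr j}) ` Ai j"
      proof
        fix e assume e: "e \<in> {e\<in>ET. Inr j \<in> e}"
        then obtain i j' where "e = {Inl i, Inr j'}" using ETE exE_elim by blast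
        with e have "e = {Inl i, Inr j}" by auto
        then show "e \<in> (\<lambda>i. {Inl i, Inr j}) ` Ai j" using e unfolding Ai_def by auto
      qed
    next
      show "(\<lambda>i. {Inl i, Inr j}) ` Ai j \<subseteq> {e\<in>ET. Inr j \<in> e}" unfolding Ai_def by blast
    qed
    moreover have "inj_on (\<lambda>i. {Inl i, Inr j}) (Ai j)" unfolding inj_on_def by (auto simp: doubleton_eq_iff)
    ultimately show ?thesis unfolding d_def by (simp add: card_image)
  qed
  have disj: "Ai ja \<inter> Ai jb = {}" if "ja \<in> J" "jb \<in> J" "ja \<noteq> jb" "pat ja = pat jb" for ja jb
  proof (rule ccontr)
    assume "Ai ja \<inter> Ai jb \<noteq> {}"
    then obtain i where i: "i \<in> Ai ja" "i \<in> Ai jb" by blast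
    then have e: "{Inl i, Inr ja} \<in> ET" "{Inl i, Inr jb} \<in> ET" unfolding Ai_def by auto
    have "{Inl i, Inr ja} \<noteq> {Inl i, Inr jb}" using that(3) by (auto simp: doubleton_eq_iff)
    moreover have "{Inl i, Inr ja} \<inter> {Inl i, Inr jb} \<noteq> {}" by auto
    ultimately have ne: "c {Inl i, Inr ja} \<noteq> c {Inl i, Inr jb}"
      using pr[unfolded proper_edges_def, rule_format, OF e(1) e(2)] by blast
    have ii: "i \<in> {s-2, s-1, s}" using subsetD[OF Ai_sub[OF that(1)] i(1)] .
    have eqs: "c {Inl (s-2), Inr ja} = c {Inl (s-2), Inr jb}" "c {Inl (s-1), Inr ja} = c {Inl (s-1), Inr jb}"
        "c {Inl s, Inr ja} = c {Inl s, Inr jb}"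
      using that(4) unfolding pat_def by simp_all
    have "c {Inl i, Inr ja} = c {Inl i, Inr jb}" using ii eqs by auto
    then show False using ne by simp
  qed
  have fA: "finite (Ai j)" if "j \<in> J" for j using Ai_sub[OF that] finite_subset by blast
  have "card (Ai j1) + card (Ai j2) + card (Ai j3) = card (Ai j1 \<union> Ai j2 \<union> Ai j3)"
    using disj[of j1 j2] disj[of j1 j3] disj[of j2 j3] jJ jj pj fA
    by (simp add: card_Un_disjoint Int_Un_distrib2)
  also have "\<dots> \<le> card {s-2, s-1, s}" using Ai_sub jJ by (intro card_mono) auto
  also have "\<dots> \<le> 3" by (intro card_insert_le_m1) simp_all
  finally have sumS: "d (Inr j1) + d (Inr j2) + d (Inr j3) \<le> 3" using d_eq jJ by simp
  have "(\<Sum>v\<in>VT. d v) = (\<Sum>v\<in>S. d v) + (\<Sum>v\<in>VT - S. d v)"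
    using fV SV by (metis add.commute sum.subset_diff)
  also have "(\<Sum>v\<in>S. d v) = d (Inr j1) + d (Inr j2) + d (Inr j3)" unfolding S_def using jj by simp
  also have "(\<Sum>v\<in>VT - S. d v) \<le> (\<Sum>v\<in>VT - S. 2)" by (rule sum_mono) (rule dle2)
  also have "\<dots> = 2 * (card VT - 3)" using S SV fV finite_subset[OF SV fV] by (simp add: card_Diff_subset)
  finally have "(\<Sum>v\<in>VT. d v) \<le> 3 + 2 * (card VT - 3)" using sumS by linarith
  then show False using hs cd cVT by linarith
qed


lemma ex_core:
  assumes s: "4 \<le> s" and t: "20 \<le> t"
  shows "core (ex_V s t) (ex_E s t) (Inl ` {1..s}) (Inr ` {1..t}) (Inl s) (Inl (s-1)) (Inl (s-2)) (Inr 1) (Inr 2) (Inr 3)"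
proof unfold_locales
  fix w :: "nat + nat" assume "w \<in> Inr ` {1..t}"
  then obtain j where j: "w = Inr j" "1 \<le> j" "j \<le> t" by auto
  have "{Inl i, Inr j} \<in> ex_E s t" if "i \<in> {s, s-1, s-2}" for i
    using that s j by (intro exE_intro) auto
  then have "{Inl s, Inr j} \<in> ex_E s t" "{Inl (s-1), Inr j} \<in> ex_E s t" "{Inl (s-2), Inr j} \<in> ex_E s t"
    by auto
  then show "{w, Inl s} \<in> ex_E s t \<and> {w, Inl (s-1)} \<in> ex_E s t \<and> {w, Inl (s-2)} \<in> ex_E s t"
    using j(1) by (metis insert_commute)
next
  fix u :: "nat + nat" assume "u \<in> Inl ` {1..s}"
  then obtain i where i: "u = Inl i" "1 \<le> i" "i \<le> s" by auto
  have "{Inl i, Inr j} \<in> ex_E s t" if "j \<in> {1, 2, 3}" for j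
    using that t i by (intro exE_intro) auto
  then show "{u, Inr 1} \<in> ex_E s t \<and> {u, Inr 2} \<in> ex_E s t \<and> {u, Inr 3} \<in> ex_E s t"
    using i by simp
qed (use s t in \<open>auto simp: ex_V_def\<close>)

theorem corollary3p6:
  shows "(\<forall>(V :: 'a set) E. chain_graph V E \<and> connected_graph V E \<and> 3 \<le> min_degree V E
            \<longrightarrow> px3 V E \<le> 3) \<and>
         (\<forall>s t. 4 \<le> s \<and> 20 \<le> t \<longrightarrow> px3 (ex_V s t) (ex_E s t) = 3)"
proof (intro conjI allI impI)
  fix V :: "'a set" and E
  assume "chain_graph V E \<and> connected_graph V E \<and> 3 \<le> min_degree V E"
  then obtain U W a0 a1 a2 b0 b1 b2 where "core V E U W a0 a1 a2 b0 b1 b2"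
    using part1 by (meson)
  then show "px3 V E \<le> 3" by (intro px3_le3 core.core_main)
next
  fix s t :: nat assume st: "4 \<le> s \<and> 20 \<le> t"
  have ex3: "\<exists>c. (\<forall>e\<in>ex_E s t. c e < 3) \<and> three_proper_coloring (ex_V s t) (ex_E s t) c"
    using st by (intro core.core_main[OF ex_core]) auto
  show "px3 (ex_V s t) (ex_E s t) = 3"
    unfolding px3_def
  proof (rule Least_equality)
    show "\<exists>c. (\<forall>e\<in>ex_E s t. c e < 3) \<and> three_proper_coloring (ex_V s t) (ex_E s t) c" by (rule ex3)
  next
    fix y assume "\<exists>c. (\<forall>e\<in>ex_E s t. c e < y) \<and> three_proper_coloring (ex_V s t) (ex_E s t) c"
    then obtain c where c: "\<forall>e\<in>ex_E s t. c e < y" "three_proper_coloring (ex_V s t) (ex_E s t) c" by blast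
    show "3 \<le> y"
    proof (rule ccontr)
      assume "\<not> 3 \<le> y"
      then have "\<forall>e\<in>ex_E s t. c e < 2" using c(1) by fastforce
      then show False using st c(2) by (intro no2[of s t c]) auto
    qed
  qed
qed

end
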